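(* For every $w_0\in V$ and every $(a,b)\in\partial A_1\times V$, $$\mathbb{E}_{w_0}\big[G(a,b)^2\big]\le 2\,\mathbb{E}_{w_0}\big[G(a,b)\big]\Big(\sup_{w'\in V}\mathbb{E}_{w'}\big[G(a,b)\big]+\sup_{(w,y)\in V\times\partial A_2}g_{(w,y)}(a,b)\Big).$$
   Context: Fix $d\ge3$; $(X_k)_{k\ge0}$ is simple random walk on $\mathbb{Z}^d$, $P_x$ its law from $x$, $H_A=\inf\{k\ge0:X_k\in A\}$, $\theta$ the time shift, and $\partial A=\{x\in A:\exists y\notin A,\|x-y\|=1\}$. Let $r$ be large and $s=s(r)>0$ with $s=o(r)$. $A_1$ is either $\{x:\|x\|<r\}$ or $\{x:\mathrm{dist}(x,\mathfrak{H}_{r-s})\le s\}$ with $\mathfrak{H}_{r-s}$ a discrete hypercube of edge length $r-s$; $A_2=\{x:\mathrm{dist}(x,x')>2s\ \forall x'\in A_1\}$; $V=\partial\{x:\mathrm{dist}(x,x')\le s\text{ for some }x'\in A_1\}$. For $w\in V$, $y\in\partial A_2$, $(a,b)\in\partial A_1\times V$, let $g_{(w,y)}(a,b)$ be the probability, for simple random walk started at $w$ conditioned on $X_{H_{\partial A_2}}=y$, that the walk hits $A_1$ before $\partial A_2$, its first point in $A_1$ is $a$, and its last visit to $V$ before time $H_{\partial A_2}$ is at $b$. Set $g_\Delta\equiv0$ for a cemetery state $\Delta$. Clothesline process: for a walk started at $w_0\in V$ set $D_0=0$, $R_1=H_{\partial A_2}$, and recursively $D_k=H_V\circ\theta_{R_k}+R_k$,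 $R_{k+1}=H_{\partial A_2}\circ\theta_{D_k}+D_k$; let $T_\Delta=\inf\{k\ge1:R_k=\infty\}$ (a.s. finite). Put $(W_k,Y_k)=(X_{D_{k-1}},X_{R_k})$ for $k<T_\Delta$ and $(W_k,Y_k)=\Delta$ for $k\ge T_\Delta$. Let $(\xi_k)_{k\ge1}$ be i.i.d. Exp(1), independent of the walk. The soft local time is $G(a,b)=\sum_{k=1}^{T_\Delta}\xi_k\,g_{(W_k,Y_k)}(a,b)$, and $\mathbb{E}_{w'}$ denotes expectation when the walk starts at $w'\in V$. *)

theory Defs
  imports "HOL-Probability.Probability"
begin

type_synonym 'd pt = "int ^ 'd"

definition edist :: "'d::finite pt \<Rightarrow> 'd pt \<Rightarrow> real" where
  "edist x y = sqrt (\<Sum>i\<in>UNIV. (real_of_int (x$i - y$i))^2)"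

definition bdry :: "'d::finite pt set \<Rightarrow> 'd pt set" where
  "bdry A = {x\<in>A. \<exists>y. y \<notin> A \<and> edist x y = 1}"

definition ball_set :: "real \<Rightarrow> 'd::finite pt set" where
  "ball_set r = {x. edist x 0 < r}"

definition cube_set :: "real \<Rightarrow> 'd::finite pt set" where
  "cube_set L = {x. \<forall>i. 2 * \<bar>real_of_int (x$i)\<bar> \<le> L}"

definition nbhd :: "real \<Rightarrow> 'd::finite pt set \<Rightarrow> 'd pt set" where
  "nbhd s A = {x. \<exists>x'\<in>A. edist x x' \<le> s}"

definition A2_of :: "real \<Rightarrow> 'd::finite pt set \<Rightarrow> 'd pt set" where
  "A2_of s A1 = {x. \<forall>x'\<in>A1. edist x x' > 2 * s}"

definition V_of :: "real \<Rightarrow> 'd::finite pt set \<Rightarrow> 'd pt set" where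
  "V_of s A1 = bdry (nbhd s A1)"

definition unit_steps :: "'d::finite pt set" where
  "unit_steps = {v. \<exists>i. v = (\<chi> j. if j = i then 1 else 0) \<or> v = (\<chi> j. if j = i then -1 else 0)}"

definition srw_steps :: "'d::finite pt stream measure" where
  "srw_steps = stream_space (measure_pmf (pmf_of_set unit_steps))"

definition walk :: "'d::finite pt \<Rightarrow> 'd pt stream \<Rightarrow> nat \<Rightarrow> 'd pt" where
  "walk x \<omega> k = x + (\<Sum>i<k. \<omega> !! i)"

text \<open>first time \<ge> n at which the path is in A (= n + H_A o theta_n)\<close>
definition hit_from :: "'a set \<Rightarrow> (nat \<Rightarrow> 'a) \<Rightarrow> nat \<Rightarrow> nat option" where
  "hit_from A p n = (if \<exists>k\<ge>n. p k \<in> A then Some (LEAST k. n \<le> k \<and> p k \<in> A) else None)"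

definition gfun :: "real \<Rightarrow> 'd::finite pt set \<Rightarrow> 'd pt \<Rightarrow> 'd pt \<Rightarrow> 'd pt \<Rightarrow> 'd pt \<Rightarrow> real" where
  "gfun s A1 w y a b =
    (let B = bdry (A2_of s A1); V = V_of s A1;
         P = (\<lambda>E. measure srw_steps {\<omega> \<in> space srw_steps. E (walk w \<omega>)})
     in P (\<lambda>p. \<exists>t h. hit_from B p 0 = Some t \<and> p t = y \<and> hit_from A1 p 0 = Some h \<and> h < t
                  \<and> p h = a \<and> (\<exists>k<t. p k \<in> V) \<and> p (GREATEST k. k < t \<and> p k \<in> V) = b)
        / P (\<lambda>p. \<exists>t. hit_from B p 0 = Some t \<and> p t = y))"

text \<open>clothesline times: cl_D k = D_k, cl_R k = R_(k+1); None = infinity\<close>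
primrec cl_D :: "'a set \<Rightarrow> 'a set \<Rightarrow> (nat \<Rightarrow> 'a) \<Rightarrow> nat \<Rightarrow> nat option" where
  "cl_D B V p 0 = Some 0"
| "cl_D B V p (Suc k) = Option.bind (Option.bind (cl_D B V p k) (hit_from B p)) (hit_from V p)"

definition cl_R :: "'a set \<Rightarrow> 'a set \<Rightarrow> (nat \<Rightarrow> 'a) \<Rightarrow> nat \<Rightarrow> nat option" where
  "cl_R B V p k = Option.bind (cl_D B V p k) (hit_from B p)"

definition joint :: "('d::finite pt stream \<times> real stream) measure" where
  "joint = srw_steps \<Otimes>\<^sub>M stream_space (density lborel (exponential_density 1))"

text \<open>soft local time G(a,b) for the walk started at w0; term k is the (k+1)-th summand,
  with g_Delta = 0 once R_(k+1) = infinity\<close>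
definition softG :: "real \<Rightarrow> 'd::finite pt set \<Rightarrow> 'd pt \<Rightarrow> 'd pt \<Rightarrow> 'd pt
                     \<Rightarrow> 'd pt stream \<times> real stream \<Rightarrow> ennreal" where
  "softG s A1 w0 a b z =
    (let p = walk w0 (fst z); B = bdry (A2_of s A1); V = V_of s A1 in
     (\<Sum>k. ennreal (snd z !! k) *
        (case cl_R B V p k of None \<Rightarrow> 0
         | Some t \<Rightarrow> ennreal (gfun s A1 (p (the (cl_D B V p k))) (p t) a b))))"

end

theory Submission
  imports Defs
begin


lemma ennreal_suminf_swap: "(\<Sum>i. \<Sum>j. f i j :: ennreal) = (\<Sum>j. \<Sum>i. f i j)"
proof -
  interpret pair_sigma_finite "count_space (UNIV::nat set)" "count_space (UNIV::nat set)"
    by (intro pair_sigma_finite.intro) (auto intro: sigma_finite_measure_count_space)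
  have "(\<Sum>i. \<Sum>j. f i j) = (\<integral>\<^sup>+i. \<integral>\<^sup>+j. f i j \<partial>count_space UNIV \<partial>count_space UNIV)"
    by (simp add: nn_integral_count_space_nat)
  also have "\<dots> = (\<integral>\<^sup>+j. \<integral>\<^sup>+i. f i j \<partial>count_space UNIV \<partial>count_space UNIV)"
    by (rule Fubini') (simp add: pair_measure_countable)
  also have "\<dots> = (\<Sum>j. \<Sum>i. f i j)"
    by (simp add: nn_integral_count_space_nat)
  finally show ?thesis .
qed




lemma (in prob_space) nn_integral_stream_split:
  assumes "f \<in> borel_measurable (stream_space M)"
  shows "(\<integral>\<^sup>+\<omega>. f \<omega> \<partial>stream_space M)
       = (\<integral>\<^sup>+\<omega>. \<integral>\<^sup>+\<omega>'. f (stake n \<omega> @- \<omega>') \<partial>stream_space M \<partial>stream_space M)"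
  using assms
proof (induction n arbitrary: f)
  case 0
  interpret S: prob_space "stream_space M" by (rule prob_space_stream_space)
  show ?case by (simp add: S.emeasure_space_1)
next
  case (Suc n)
  interpret S: prob_space "stream_space M" by (rule prob_space_stream_space)
  note [measurable] = Suc.prems
  have "(\<integral>\<^sup>+\<omega>. f \<omega> \<partial>stream_space M) = (\<integral>\<^sup>+x. (\<integral>\<^sup>+X. f (x ## X) \<partial>stream_space M) \<partial>M)"
    by (rule nn_integral_stream_space) simp
  also have "\<dots> = (\<integral>\<^sup>+x. (\<integral>\<^sup>+X. \<integral>\<^sup>+\<omega>'. f (x ## (stake n X @- \<omega>')) \<partial>stream_space M \<partial>stream_space M) \<partial>M)"
    by (intro nn_integral_cong Suc.IH) simp
  also have "\<dots> = (\<integral>\<^sup>+\<omega>. \<integral>\<^sup>+\<omega>'. f (stake (Suc n) \<omega> @- \<omega>') \<partial>stream_space M \<partial>stream_space M)"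
  proof (subst nn_integral_stream_space[of "\<lambda>\<omega>. \<integral>\<^sup>+\<omega>'. f (stake (Suc n) \<omega> @- \<omega>') \<partial>stream_space M"])
    show "(\<lambda>\<omega>. \<integral>\<^sup>+\<omega>'. f (stake (Suc n) \<omega> @- \<omega>') \<partial>stream_space M) \<in> borel_measurable (stream_space M)"
      by measurable
  qed simp
  finally show ?case .
qed

lemma (in prob_space) nn_integral_snth:
  assumes [measurable]: "f \<in> borel_measurable M"
  shows "(\<integral>\<^sup>+\<omega>. f (\<omega> !! i) \<partial>stream_space M) = (\<integral>\<^sup>+x. f x \<partial>M)"
proof -
  interpret S: prob_space "stream_space M" by (rule prob_space_stream_space)
  have "(\<integral>\<^sup>+\<omega>. f (\<omega> !! i) \<partial>stream_space M)
       = (\<integral>\<^sup>+\<omega>. \<integral>\<^sup>+\<omega>'. f ((stake i \<omega> @- \<omega>') !! i) \<partial>stream_space M \<partial>stream_space M)"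
    by (rule nn_integral_stream_split) simp
  also have "\<dots> = (\<integral>\<^sup>+\<omega>. \<integral>\<^sup>+\<omega>'. f (\<omega>' !! 0) \<partial>stream_space M \<partial>stream_space M)"
    by simp
  also have "\<dots> = (\<integral>\<^sup>+\<omega>'. f (\<omega>' !! 0) \<partial>stream_space M)"
    by (simp add: S.emeasure_space_1)
  also have "\<dots> = (\<integral>\<^sup>+x. (\<integral>\<^sup>+X. f ((x ## X) !! 0) \<partial>stream_space M) \<partial>M)"
    by (rule nn_integral_stream_space) simp
  also have "\<dots> = (\<integral>\<^sup>+x. f x \<partial>M)"
    by (simp add: S.emeasure_space_1)
  finally show ?thesis .
qed

lemma (in prob_space) nn_integral_snth2:
  assumes [measurable]: "f \<in> borel_measurable M" "g \<in> borel_measurable M" and "i < k"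
  shows "(\<integral>\<^sup>+\<omega>. f (\<omega> !! i) * g (\<omega> !! k) \<partial>stream_space M) = (\<integral>\<^sup>+x. f x \<partial>M) * (\<integral>\<^sup>+x. g x \<partial>M)"
proof -
  interpret S: prob_space "stream_space M" by (rule prob_space_stream_space)
  have "(\<integral>\<^sup>+\<omega>. f (\<omega> !! i) * g (\<omega> !! k) \<partial>stream_space M)
       = (\<integral>\<^sup>+\<omega>. \<integral>\<^sup>+\<omega>'. f ((stake (Suc i) \<omega> @- \<omega>') !! i) * g ((stake (Suc i) \<omega> @- \<omega>') !! k) \<partial>stream_space M \<partial>stream_space M)"
    by (rule nn_integral_stream_split) simp
  also have "\<dots> = (\<integral>\<^sup>+\<omega>. \<integral>\<^sup>+\<omega>'. f (\<omega> !! i) * g (\<omega>' !! (k - Suc i)) \<partial>stream_space M \<partial>stream_space M)"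
    using \<open>i < k\<close> by (intro nn_integral_cong) (simp add: shift_snth del: stake.simps)
  also have "\<dots> = (\<integral>\<^sup>+\<omega>. f (\<omega> !! i) * (\<integral>\<^sup>+x. g x \<partial>M) \<partial>stream_space M)"
    by (simp add: nn_integral_cmult nn_integral_snth)
  also have "\<dots> = (\<integral>\<^sup>+x. f x \<partial>M) * (\<integral>\<^sup>+x. g x \<partial>M)"
    by (simp add: nn_integral_multc nn_integral_snth)
  finally show ?thesis .
qed

lemma exp_moment1: "(\<integral>\<^sup>+x. ennreal x \<partial>density lborel (exponential_density 1)) = 1"
proof -
  have "(\<integral>\<^sup>+x. ennreal x \<partial>density lborel (exponential_density 1))
      = (\<integral>\<^sup>+x. ennreal (exponential_density 1 x * x ^ 1) \<partial>lborel)"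
    by (subst nn_integral_density)
       (auto intro!: nn_integral_cong simp: ennreal_mult'[symmetric] exponential_density_def)
  also have "\<dots> = 1" by (subst nn_integral_erlang_ith_moment) auto
  finally show ?thesis .
qed

lemma exp_moment2: "(\<integral>\<^sup>+x. ennreal x * ennreal x \<partial>density lborel (exponential_density 1)) = 2"
proof -
  have "(\<integral>\<^sup>+x. ennreal x * ennreal x \<partial>density lborel (exponential_density 1))
      = (\<integral>\<^sup>+x. ennreal (exponential_density 1 x * x ^ 2) \<partial>lborel)"
    by (subst nn_integral_density)
       (auto intro!: nn_integral_cong simp: ennreal_mult'[symmetric] exponential_density_def power2_eq_square)
  also have "\<dots> = 2" by (subst nn_integral_erlang_ith_moment) auto
  finally show ?thesis .
qed




lemma hit_from_Some_iff:
  "hit_from A p n = Some t \<longleftrightarrow> n \<le> t \<and> p t \<in> A \<and> (\<forall>k. n \<le> k \<and> k < t \<longrightarrow> p k \<notin> A)"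
proof
  assume h: "hit_from A p n = Some t"
  then have ex: "\<exists>k\<ge>n. p k \<in> A" by (auto simp: hit_from_def split: if_splits)
  then have t: "t = (LEAST k. n \<le> k \<and> p k \<in> A)" using h by (simp add: hit_from_def)
  from ex obtain k0 where "n \<le> k0 \<and> p k0 \<in> A" by auto
  then have "n \<le> t \<and> p t \<in> A" unfolding t by (rule LeastI)
  moreover have "\<forall>k. n \<le> k \<and> k < t \<longrightarrow> p k \<notin> A"
    using not_less_Least unfolding t by blast
  ultimately show "n \<le> t \<and> p t \<in> A \<and> (\<forall>k. n \<le> k \<and> k < t \<longrightarrow> p k \<notin> A)" by blast
next
  assume h: "n \<le> t \<and> p t \<in> A \<and> (\<forall>k. n \<le> k \<and> k < t \<longrightarrow> p k \<notin> A)"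
  then have ex: "\<exists>k\<ge>n. p k \<in> A" by auto
  have "(LEAST k. n \<le> k \<and> p k \<in> A) = t"
    by (rule Least_equality) (use h not_less in auto)
  then show "hit_from A p n = Some t" using ex by (simp add: hit_from_def)
qed

lemma hit_from_None_iff: "hit_from A p n = None \<longleftrightarrow> (\<forall>k\<ge>n. p k \<notin> A)"
  by (auto simp: hit_from_def)

lemma hit_from_agree:
  assumes "hit_from A p n = Some t" "\<And>i. i \<le> t \<Longrightarrow> p i = q i"
  shows "hit_from A q n = Some t"
  using assms by (auto simp: hit_from_Some_iff)

lemma hit_from_shift:
  "hit_from A p (n + m) = map_option ((+) n) (hit_from A (\<lambda>i. p (n + i)) m)"
proof (cases "hit_from A (\<lambda>i. p (n + i)) m")
  case None
  have "\<forall>k\<ge>n + m. p k \<notin> A"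
  proof (intro allI impI)
    fix k assume k: "n + m \<le> k"
    have "\<forall>k\<ge>m. p (n + k) \<notin> A" using None by (simp add: hit_from_None_iff)
    moreover have "m \<le> k - n" using k by linarith
    ultimately have "p (n + (k - n)) \<notin> A" by blast
    then show "p k \<notin> A" using k by simp
  qed
  then show ?thesis unfolding None option.map(1) by (simp add: hit_from_None_iff)
next
  case (Some t)
  have h: "m \<le> t \<and> p (n+t) \<in> A \<and> (\<forall>k. m \<le> k \<and> k < t \<longrightarrow> p (n+k) \<notin> A)"
    using Some by (simp add: hit_from_Some_iff)
  have "\<forall>k. n+m \<le> k \<and> k < n+t \<longrightarrow> p k \<notin> A"
  proof (intro allI impI)
    fix k assume k: "n+m \<le> k \<and> k < n+t"
    then have "m \<le> k-n \<and> k-n < t" by linarith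
    with h have "p (n+(k-n)) \<notin> A" by blast
    then show "p k \<notin> A" using k by simp
  qed
  then have "hit_from A p (n + m) = Some (n + t)" using h by (simp add: hit_from_Some_iff)
  then show ?thesis using Some by simp
qed

lemma cl_D_agree:
  assumes "cl_D B V p k = Some t" "\<And>i. i \<le> t \<Longrightarrow> p i = q i"
  shows "cl_D B V q k = Some t"
  using assms
proof (induction k arbitrary: t)
  case 0 then show ?case by simp
next
  case (Suc k)
  from Suc.prems(1) obtain d r where d: "cl_D B V p k = Some d" and r: "hit_from B p d = Some r"
    and t: "hit_from V p r = Some t"
    by (auto simp: bind_eq_Some_conv)
  have rt: "r \<le> t" using t by (simp add: hit_from_Some_iff)
  have dr: "d \<le> r" using r by (simp add: hit_from_Some_iff)
  have "cl_D B V q k = Some d" using Suc.IH[OF d] Suc.prems(2) dr rt by simp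
  moreover have "hit_from B q d = Some r" using hit_from_agree[OF r] Suc.prems(2) rt by simp
  moreover have "hit_from V q r = Some t" using hit_from_agree[OF t] Suc.prems(2) by simp
  ultimately show ?case by simp
qed

lemma cl_D_le: "cl_D B V p k = Some t \<Longrightarrow> cl_D B V p j = Some s \<Longrightarrow> j \<le> k \<Longrightarrow> s \<le> t"
proof (induction k arbitrary: t)
  case 0 then show ?case by simp
next
  case (Suc k)
  from Suc.prems(1) obtain d r where d: "cl_D B V p k = Some d" and r: "hit_from B p d = Some r"
    and t: "hit_from V p r = Some t"
    by (auto simp: bind_eq_Some_conv)
  have "d \<le> t" using r t by (auto simp: hit_from_Some_iff)
  then show ?case using Suc d by (cases "j = Suc k") auto
qed

lemma cl_D_None_mono: "cl_D B V p k = None \<Longrightarrow> cl_D B V p (k + m) = None"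
  by (induction m) auto

lemma cl_D_shift:
  assumes "cl_D B V p j = Some n"
  shows "cl_D B V p (j + m) = map_option ((+) n) (cl_D B V (\<lambda>i. p (n + i)) m)"
proof (induction m)
  case 0 then show ?case using assms by simp
next
  case (Suc m)
  show ?case
  proof (cases "cl_D B V (\<lambda>i. p (n + i)) m")
    case None then show ?thesis using Suc by simp
  next
    case (Some x)
    then have "cl_D B V p (j + m) = Some (n + x)" using Suc by simp
    then show ?thesis using Some
      by (simp add: hit_from_shift Option.bind_map_option[unfolded comp_def] map_option_bind o_def
                    option.map_comp bind_map_option)
  qed
qed

lemma cl_D_Suc_Some:
  assumes "cl_D B V p (Suc k) = Some n"
  shows "\<exists>d t. cl_D B V p k = Some d \<and> cl_R B V p k = Some t \<and> d \<le> t \<and> t \<le> n \<and> p n \<in> V"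
  using assms by (auto simp: bind_eq_Some_conv cl_R_def hit_from_Some_iff)

lemma cl_R_Some:
  assumes "cl_R B V p k = Some t"
  shows "\<exists>d. cl_D B V p k = Some d \<and> d \<le> t \<and> p t \<in> B"
  using assms by (auto simp: bind_eq_Some_conv cl_R_def hit_from_Some_iff)

lemma cl_D_Some_in:
  assumes "cl_D B V p k = Some d" "p 0 \<in> V"
  shows "p d \<in> V"
  using assms by (cases k) (auto simp: bind_eq_Some_conv hit_from_Some_iff)




lemma walk_shift: "walk w \<omega> (n + i) = walk (walk w \<omega> n) (sdrop n \<omega>) i"
  by (induction i) (simp_all add: walk_def sdrop_snth add.assoc)

lemma walk_agree:
  assumes "stake n \<omega> = stake n \<omega>'" "i \<le> n"
  shows "walk w \<omega> i = walk w \<omega>' i"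
proof -
  have "\<omega> !! j = \<omega>' !! j" if j: "j < i" for j
  proof -
    have "j < n" using j assms(2) by linarith
    then have "stake n \<omega> ! j = stake n \<omega>' ! j" using assms(1) by simp
    then show ?thesis using \<open>j < n\<close> by simp
  qed
  then show ?thesis by (simp add: walk_def)
qed

lemma measurable_stake_fn:
  "(\<lambda>\<omega>. h (stake n \<omega>)) \<in> borel_measurable (stream_space (measure_pmf (P :: ('a::countable) pmf)))"
proof -
  have m: "stake n \<in> measurable (stream_space (count_space UNIV)) (count_space (UNIV :: 'a list set))"
    by (rule measurable_stake)
  have e: "measurable (stream_space (measure_pmf P)) (count_space (UNIV :: 'a list set))
      = measurable (stream_space (count_space UNIV)) (count_space (UNIV :: 'a list set))"
    by (intro measurable_cong_sets sets_stream_space_cong) (simp_all add: sets_measure_pmf_count_space)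
  have "stake n \<in> measurable (stream_space (measure_pmf P)) (count_space (UNIV :: 'a list set))"
    using m unfolding e .
  then show ?thesis by (rule measurable_compose) simp
qed

lemma measurable_fd:
  fixes f :: "('a::countable) stream \<Rightarrow> ennreal"
  assumes "\<And>\<omega> \<omega>'. stake n \<omega> = stake n \<omega>' \<Longrightarrow> f \<omega> = f \<omega>'"
  shows "f \<in> borel_measurable (stream_space (measure_pmf P))"
proof -
  have m: "(\<lambda>\<omega>. (\<lambda>l. f (l @- sconst undefined)) (stake n \<omega>)) \<in> borel_measurable (stream_space (measure_pmf P))"
    by (rule measurable_stake_fn)
  have e: "(\<lambda>\<omega>. (\<lambda>l. f (l @- sconst undefined)) (stake n \<omega>)) = f"
    by (rule ext, rule assms) (simp add: stake_shift)
  show ?thesis using m unfolding e .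
qed

lemma cl_R_agree:
  assumes "cl_R B V p k = Some t" "\<And>i. i \<le> t \<Longrightarrow> p i = q i"
  shows "cl_R B V q k = Some t \<and> cl_D B V q k = cl_D B V p k"
proof -
  from assms(1) obtain d where d: "cl_D B V p k = Some d" and r: "hit_from B p d = Some t"
    by (auto simp: cl_R_def bind_eq_Some_conv)
  have dt: "d \<le> t" using r by (simp add: hit_from_Some_iff)
  have "cl_D B V q k = Some d" using cl_D_agree[OF d] assms(2) dt by simp
  moreover have "hit_from B q d = Some t" using hit_from_agree[OF r] assms(2) by simp
  ultimately show ?thesis using d by (simp add: cl_R_def)
qed

definition cterm :: "'d::finite pt set \<Rightarrow> 'd pt set \<Rightarrow> ('d pt \<Rightarrow> 'd pt \<Rightarrow> ennreal) \<Rightarrow> 'd pt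
    \<Rightarrow> 'd pt stream \<Rightarrow> nat \<Rightarrow> ennreal" where
  "cterm B V g w \<omega> k = (case cl_R B V (walk w \<omega>) k of None \<Rightarrow> 0
     | Some t \<Rightarrow> g (walk w \<omega> (the (cl_D B V (walk w \<omega>) k))) (walk w \<omega> t))"

definition ctermt :: "'d::finite pt set \<Rightarrow> 'd pt set \<Rightarrow> ('d pt \<Rightarrow> 'd pt \<Rightarrow> ennreal) \<Rightarrow> 'd pt
    \<Rightarrow> 'd pt stream \<Rightarrow> nat \<Rightarrow> nat \<Rightarrow> ennreal" where
  "ctermt B V g w \<omega> k t = (if cl_R B V (walk w \<omega>) k = Some t then
     g (walk w \<omega> (the (cl_D B V (walk w \<omega>) k))) (walk w \<omega> t) else 0)"

lemma cterm_suminf: "cterm B V g w \<omega> k = (\<Sum>t. ctermt B V g w \<omega> k t)"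
proof (cases "cl_R B V (walk w \<omega>) k")
  case None then show ?thesis by (simp add: cterm_def ctermt_def)
next
  case (Some t0)
  have "(\<lambda>t. ctermt B V g w \<omega> k t) = (\<lambda>t. if t = t0 then g (walk w \<omega> (the (cl_D B V (walk w \<omega>) k))) (walk w \<omega> t) else 0)"
    using Some by (auto simp: ctermt_def)
  then show ?thesis using Some sums_unique[OF sums_single] by (simp add: cterm_def)
qed

lemma ctermt_fd:
  assumes "stake t \<omega> = stake t \<omega>'"
  shows "ctermt B V g w \<omega> k t = ctermt B V g w \<omega>' k t"
proof -
  have ag: "\<And>i. i \<le> t \<Longrightarrow> walk w \<omega> i = walk w \<omega>' i" using walk_agree[OF assms] by blast
  have ag': "\<And>i. i \<le> t \<Longrightarrow> walk w \<omega>' i = walk w \<omega> i" using ag by simp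
  show ?thesis
  proof (cases "cl_R B V (walk w \<omega>) k = Some t")
    case True
    from cl_R_agree[OF True ag] have "cl_R B V (walk w \<omega>') k = Some t"
      and e: "cl_D B V (walk w \<omega>') k = cl_D B V (walk w \<omega>) k" by auto
    moreover obtain d where "cl_D B V (walk w \<omega>) k = Some d" "d \<le> t"
      using cl_R_Some[OF True] by auto
    ultimately show ?thesis using True ag by (simp add: ctermt_def)
  next
    case False
    have "cl_R B V (walk w \<omega>') k \<noteq> Some t"
    proof
      assume "cl_R B V (walk w \<omega>') k = Some t"
      from cl_R_agree[OF this ag'] False show False by simp
    qed
    then show ?thesis using False by (simp add: ctermt_def)
  qed
qed

lemma measurable_cterm[measurable]:
  "(\<lambda>\<omega>. cterm B V g w \<omega> k) \<in> borel_measurable srw_steps"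
proof -
  have e: "(\<lambda>\<omega>. cterm B V g w \<omega> k) = (\<lambda>\<omega>. \<Sum>t. ctermt B V g w \<omega> k t)"
    by (simp add: cterm_suminf)
  have "(\<lambda>\<omega>. ctermt B V g w \<omega> k t) \<in> borel_measurable srw_steps" for t
    unfolding srw_steps_def by (rule measurable_fd[of t]) (rule ctermt_fd)
  then show ?thesis unfolding e by (rule borel_measurable_suminf_order)
qed




abbreviation "XD \<equiv> density lborel (exponential_density 1)"
abbreviation "XI \<equiv> stream_space XD"

lemma prob_XD: "prob_space XD" by (rule prob_space_exponential_density) simp

lemma meas_ennreal_XD[measurable]: "(\<lambda>x. ennreal x) \<in> borel_measurable XD"
  by simp

lemma meas_xi[measurable]: "(\<lambda>\<xi>. ennreal (\<xi> !! k)) \<in> borel_measurable XI"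
  by (rule measurable_compose[OF measurable_snth meas_ennreal_XD])

lemma xi_mom1: "(\<integral>\<^sup>+\<xi>. ennreal (\<xi> !! k) \<partial>XI) = 1"
  using prob_space.nn_integral_snth[OF prob_XD meas_ennreal_XD] exp_moment1 by simp

lemma xi_mom2: "(\<integral>\<^sup>+\<xi>. ennreal (\<xi> !! j) * ennreal (\<xi> !! k) \<partial>XI) = (if j = k then 2 else 1)"
proof (cases j k rule: linorder_cases)
  case less
  then show ?thesis
    using prob_space.nn_integral_snth2[OF prob_XD meas_ennreal_XD meas_ennreal_XD less] exp_moment1 by simp
next
  case equal
  have "(\<lambda>x. ennreal x * ennreal x) \<in> borel_measurable XD" by simp
  then show ?thesis
    using prob_space.nn_integral_snth[OF prob_XD, of "\<lambda>x. ennreal x * ennreal x" j] exp_moment2 equal by simp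
next
  case greater
  then show ?thesis
    using prob_space.nn_integral_snth2[OF prob_XD meas_ennreal_XD meas_ennreal_XD greater] exp_moment1
    by (simp add: mult.commute)
qed

lemma xi_first: "(\<integral>\<^sup>+\<xi>. (\<Sum>k. ennreal (\<xi> !! k) * c k) \<partial>XI) = (\<Sum>k. c k)"
proof -
  have "(\<integral>\<^sup>+\<xi>. (\<Sum>k. ennreal (\<xi> !! k) * c k) \<partial>XI) = (\<Sum>k. \<integral>\<^sup>+\<xi>. ennreal (\<xi> !! k) * c k \<partial>XI)"
    by (rule nn_integral_suminf) simp
  also have "\<dots> = (\<Sum>k. c k)"
    by (simp add: nn_integral_multc xi_mom1)
  finally show ?thesis .
qed

lemma suminf_shift_gt: "(\<Sum>m. c (Suc j + m)) = (\<Sum>k. if j < k then c k else (0::ennreal))"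
proof -
  have "(\<Sum>m. (\<lambda>k. if j < k then c k else (0::ennreal)) ((\<lambda>m. Suc j + m) m)) = (\<Sum>k. if j < k then c k else 0)"
    apply (rule suminf_mono_reindex)
     apply (simp add: strict_mono_def)
    apply (clarsimp simp: image_iff)
    subgoal for k by (drule spec[of _ "k - Suc j"]) simp
    done
  then show ?thesis by simp
qed

lemma ennreal_suminf_add3: "(\<Sum>k. a k + b k + d k) = (\<Sum>k. a k) + (\<Sum>k. b k) + (\<Sum>k. d k :: ennreal)"
  by (simp add: suminf_add[symmetric] summableI)

lemma aux_alg: "b + a * 2 + b = 2 * (a + b :: ennreal)"
  by (simp add: mult_2_right distrib_left add_ac mult.commute)

lemma xi_second:
  "(\<integral>\<^sup>+\<xi>. (\<Sum>k. ennreal (\<xi> !! k) * c k)^2 \<partial>XI) = 2 * (\<Sum>j. c j * c j + c j * (\<Sum>m. c (Suc j + m)))"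
proof -
  define m :: "nat \<Rightarrow> nat \<Rightarrow> ennreal" where "m j k = (if j = k then 2 else 1)" for j k
  have sq: "(\<Sum>k. ennreal (\<xi> !! k) * c k)^2
      = (\<Sum>j. \<Sum>k. (c j * c k) * (ennreal (\<xi> !! j) * ennreal (\<xi> !! k)))" for \<xi>
    by (simp add: power2_eq_square ennreal_suminf_cmult[symmetric] ennreal_suminf_multc[symmetric] ac_simps
             del: ennreal_suminf_cmult ennreal_suminf_multc)
  have "(\<integral>\<^sup>+\<xi>. (\<Sum>k. ennreal (\<xi> !! k) * c k)^2 \<partial>XI)
      = (\<Sum>j. \<Sum>k. \<integral>\<^sup>+\<xi>. (c j * c k) * (ennreal (\<xi> !! j) * ennreal (\<xi> !! k)) \<partial>XI)"
    unfolding sq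
    by (subst nn_integral_suminf, simp, subst nn_integral_suminf, simp_all)
  also have "\<dots> = (\<Sum>j. \<Sum>k. c j * c k * m j k)"
    by (simp add: nn_integral_cmult xi_mom2 m_def)
  also have "\<dots> = (\<Sum>j. (\<Sum>k. if k < j then c j * c k else 0) + c j * c j * 2
                      + (\<Sum>k. if j < k then c j * c k else 0))"
  proof -
    have "(\<Sum>k. c j * c k * m j k) = (\<Sum>k. if k < j then c j * c k else 0) + c j * c j * 2
                      + (\<Sum>k. if j < k then c j * c k else 0)" for j
    proof -
      have "(\<Sum>k. c j * c k * m j k) = (\<Sum>k. (if k < j then c j * c k else 0)
               + (if k = j then c j * c k * 2 else 0) + (if j < k then c j * c k else 0))"
        by (intro suminf_cong) (auto simp: m_def)
      also have "\<dots> = (\<Sum>k. if k < j then c j * c k else 0) + (\<Sum>k. if k = j then c j * c k * 2 else 0)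
                      + (\<Sum>k. if j < k then c j * c k else 0)"
        by (rule ennreal_suminf_add3)
      also have "(\<Sum>k. if k = j then c j * c k * 2 else 0) = c j * c j * 2"
        using sums_unique[OF sums_single[of j "\<lambda>k. c j * c k * 2"]] by simp
      finally show ?thesis .
    qed
    then show ?thesis by simp
  qed
  also have "\<dots> = (\<Sum>j. \<Sum>k. if k < j then c j * c k else 0) + (\<Sum>j. c j * c j * 2)
                      + (\<Sum>j. \<Sum>k. if j < k then c j * c k else 0)"
    by (rule ennreal_suminf_add3)
  also have "(\<Sum>j. \<Sum>k. if k < j then c j * c k else 0) = (\<Sum>j. \<Sum>k. if j < k then c j * c k else (0::ennreal))"
    by (subst ennreal_suminf_swap) (intro suminf_cong, simp add: mult.commute)
  also have "(\<Sum>j. \<Sum>k. if j < k then c j * c k else 0) = (\<Sum>j. c j * (\<Sum>m. c (Suc j + m)))"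
  proof -
    have "(\<Sum>k. if j < k then c j * c k else 0) = c j * (\<Sum>m. c (Suc j + m))" for j
      using suminf_shift_gt[of "\<lambda>k. c j * c k" j] by simp
    then show ?thesis by simp
  qed
  also have "(\<Sum>j. c j * (\<Sum>m. c (Suc j + m))) + (\<Sum>j. c j * c j * 2) + (\<Sum>j. c j * (\<Sum>m. c (Suc j + m)))
     = 2 * ((\<Sum>j. c j * c j) + (\<Sum>j. c j * (\<Sum>m. c (Suc j + m))))"
    unfolding ennreal_suminf_multc by (rule aux_alg)
  also have "(\<Sum>j. c j * c j) + (\<Sum>j. c j * (\<Sum>m. c (Suc j + m))) = (\<Sum>j. c j * c j + c j * (\<Sum>m. c (Suc j + m)))"
    by (simp add: suminf_add summableI)
  finally show ?thesis .
qed




abbreviation "PM \<equiv> measure_pmf (pmf_of_set (unit_steps :: 'd::finite pt set))"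

lemma srw_eq: "srw_steps = stream_space PM" by (simp add: srw_steps_def)

lemma prob_PM: "prob_space PM" by (rule prob_space_measure_pmf)

lemma prob_srw: "prob_space (srw_steps :: 'd::finite pt stream measure)"
  unfolding srw_eq by (rule prob_space.prob_space_stream_space[OF prob_PM])

lemma walk_0[simp]: "walk w \<omega> 0 = w" by (simp add: walk_def)

lemma walk_shift_fun: "(\<lambda>i. walk w \<omega> (n + i)) = walk (walk w \<omega> n) (sdrop n \<omega>)"
  by (rule ext) (rule walk_shift)

lemma cl_R_shift:
  assumes "cl_D B V p j = Some n"
  shows "cl_R B V p (j + m) = map_option ((+) n) (cl_R B V (\<lambda>i. p (n + i)) m)"
proof (cases "cl_D B V (\<lambda>i. p (n + i)) m")
  case None then show ?thesis using cl_D_shift[OF assms, of m] by (simp add: cl_R_def)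
next
  case (Some x)
  then have "cl_D B V p (j + m) = Some (n + x)" using cl_D_shift[OF assms, of m] by simp
  then show ?thesis using Some by (simp add: cl_R_def hit_from_shift)
qed

lemma cterm_shift:
  assumes "cl_D B V (walk w \<omega>) j = Some n"
  shows "cterm B V g w \<omega> (j + m) = cterm B V g (walk w \<omega> n) (sdrop n \<omega>) m"
proof -
  let ?p = "walk w \<omega>"
  let ?q = "walk (walk w \<omega> n) (sdrop n \<omega>)"
  have q: "?q = (\<lambda>i. ?p (n + i))" by (simp add: walk_shift_fun)
  have R: "cl_R B V ?p (j + m) = map_option ((+) n) (cl_R B V ?q m)"
    unfolding q by (rule cl_R_shift[OF assms])
  have D: "cl_D B V ?p (j + m) = map_option ((+) n) (cl_D B V ?q m)"
    unfolding q by (rule cl_D_shift[OF assms])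
  show ?thesis
  proof (cases "cl_R B V ?q m")
    case None then show ?thesis using R by (simp add: cterm_def)
  next
    case (Some t)
    then obtain d where d: "cl_D B V ?q m = Some d" by (auto simp: cl_R_def bind_eq_Some_conv)
    have "?p (n + d) = ?q d" "?p (n + t) = ?q t" by (simp_all add: walk_shift)
    then show ?thesis using R D Some d by (simp add: cterm_def)
  qed
qed

lemma cterm_after_None:
  assumes "cl_D B V (walk w \<omega>) j = None"
  shows "cterm B V g w \<omega> (j + m) = 0"
  using cl_D_None_mono[OF assms, of m] by (simp add: cterm_def cl_R_def)

lemma cterm_le:
  assumes "w \<in> V" "\<And>w y. w \<in> V \<Longrightarrow> y \<in> B \<Longrightarrow> g w y \<le> gs"
  shows "cterm B V g w \<omega> j \<le> gs"
proof (cases "cl_R B V (walk w \<omega>) j")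
  case None then show ?thesis by (simp add: cterm_def)
next
  case (Some t)
  from cl_R_Some[OF Some] obtain d where d: "cl_D B V (walk w \<omega>) j = Some d" "walk w \<omega> t \<in> B" by auto
  have "walk w \<omega> d \<in> V" using cl_D_Some_in[OF d(1)] assms(1) by simp
  then show ?thesis using Some d assms(2) by (simp add: cterm_def)
qed

definition Acoef where
  "Acoef B V g w j n \<omega> = (if cl_D B V (walk w \<omega>) (Suc j) = Some n then cterm B V g w \<omega> j else 0)"




lemma Acoef_fd:
  assumes "stake n \<omega> = stake n \<omega>'"
  shows "Acoef B V g w j n \<omega> = Acoef B V g w j n \<omega>'"
proof -
  have key: "Acoef B V g w j n \<omega>1 = Acoef B V g w j n \<omega>2"
    if st: "stake n \<omega>1 = stake n \<omega>2" and h: "cl_D B V (walk w \<omega>1) (Suc j) = Some n" for \<omega>1 \<omega>2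
  proof -
    have ag: "\<And>i. i \<le> n \<Longrightarrow> walk w \<omega>1 i = walk w \<omega>2 i" using walk_agree[OF st] by blast
    have h2: "cl_D B V (walk w \<omega>2) (Suc j) = Some n" using cl_D_agree[OF h ag] .
    from cl_D_Suc_Some[OF h] obtain d t where dt: "cl_D B V (walk w \<omega>1) j = Some d"
      "cl_R B V (walk w \<omega>1) j = Some t" "d \<le> t" "t \<le> n" by blast
    have ag2: "\<And>i. i \<le> t \<Longrightarrow> walk w \<omega>1 i = walk w \<omega>2 i" using ag dt(4) by simp
    have R2: "cl_R B V (walk w \<omega>2) j = Some t" and D2: "cl_D B V (walk w \<omega>2) j = Some d"
      using cl_R_agree[OF dt(2) ag2] dt(1) by auto
    have c1: "cterm B V g w \<omega>1 j = g (walk w \<omega>1 d) (walk w \<omega>1 t)"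
      unfolding cterm_def using dt(1,2) by simp
    have c2: "cterm B V g w \<omega>2 j = g (walk w \<omega>2 d) (walk w \<omega>2 t)"
      unfolding cterm_def using R2 D2 by simp
    have "walk w \<omega>1 d = walk w \<omega>2 d" "walk w \<omega>1 t = walk w \<omega>2 t"
      using ag2 dt(3) by auto
    then have "cterm B V g w \<omega>1 j = cterm B V g w \<omega>2 j" using c1 c2 by simp
    then show ?thesis unfolding Acoef_def using h h2 by (simp only: if_True option.inject refl)
  qed
  show ?thesis
  proof (cases "cl_D B V (walk w \<omega>) (Suc j) = Some n")
    case True then show ?thesis using key[OF assms] by blast
  next
    case F1: False
    show ?thesis
    proof (cases "cl_D B V (walk w \<omega>') (Suc j) = Some n")
      case True then show ?thesis using key[OF assms[symmetric]] by simp
    next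
      case False then show ?thesis using F1 by (simp add: Acoef_def)
    qed
  qed
qed

lemma measurable_Acoef[measurable]: "Acoef B V g w j n \<in> borel_measurable srw_steps"
  unfolding srw_eq by (rule measurable_fd[of n]) (rule Acoef_fd)

definition Tsum where "Tsum B V g w \<omega> = (\<Sum>k. cterm B V g w \<omega> k)"

lemma measurable_Tsum[measurable]: "Tsum B V g w \<in> borel_measurable srw_steps"
  unfolding Tsum_def by measurable

lemma measurable_Rsum[measurable]: "(\<lambda>\<omega>. \<Sum>m. cterm B V g w \<omega> (Suc j + m)) \<in> borel_measurable srw_steps"
  by measurable

lemma pointwise_decomp:
  "cterm B V g w \<omega> j * (\<Sum>m. cterm B V g w \<omega> (Suc j + m))
     = (\<Sum>n. Acoef B V g w j n \<omega> * (\<Sum>m. cterm B V g w \<omega> (Suc j + m)))"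
proof (cases "cl_D B V (walk w \<omega>) (Suc j)")
  case None then show ?thesis using cterm_after_None[OF None] by (simp add: Acoef_def)
next
  case (Some n0)
  have "(\<lambda>n. Acoef B V g w j n \<omega> * (\<Sum>m. cterm B V g w \<omega> (Suc j + m)))
     = (\<lambda>n. if n = n0 then cterm B V g w \<omega> j * (\<Sum>m. cterm B V g w \<omega> (Suc j + m)) else 0)"
    using Some by (auto simp: Acoef_def)
  moreover have "(\<Sum>n. if n = n0 then X else (0::ennreal)) = X" for X
    using sums_unique[OF sums_single[of n0 "\<lambda>_. X"]] by simp
  ultimately show ?thesis by (simp only:)
qed

lemma Acoef_sum_le: "(\<Sum>n. Acoef B V g w j n \<omega>) \<le> cterm B V g w \<omega> j"
proof (cases "cl_D B V (walk w \<omega>) (Suc j)")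
  case None then show ?thesis by (simp add: Acoef_def)
next
  case (Some n0)
  have "(\<lambda>n. Acoef B V g w j n \<omega>) = (\<lambda>n. if n = n0 then cterm B V g w \<omega> j else 0)"
    using Some by (auto simp: Acoef_def)
  moreover have "(\<Sum>n. if n = n0 then X else (0::ennreal)) = X" for X
    using sums_unique[OF sums_single[of n0 "\<lambda>_. X"]] by simp
  ultimately show ?thesis by (simp only: order_refl)
qed

lemma Acoef_R:
  "Acoef B V g w j n \<omega> * (\<Sum>m. cterm B V g w \<omega> (Suc j + m))
     = Acoef B V g w j n \<omega> * Tsum B V g (walk w \<omega> n) (sdrop n \<omega>)"
proof (cases "cl_D B V (walk w \<omega>) (Suc j) = Some n")
  case True
  have "\<And>m. cterm B V g w \<omega> (Suc j + m) = cterm B V g (walk w \<omega> n) (sdrop n \<omega>) m"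
    by (rule cterm_shift[OF True])
  then show ?thesis by (simp only: Tsum_def)
next
  case False then show ?thesis by (simp add: Acoef_def)
qed

lemma Acoef_nz: "Acoef B V g w j n \<omega> \<noteq> 0 \<Longrightarrow> walk w \<omega> n \<in> V"
proof -
  assume h: "Acoef B V g w j n \<omega> \<noteq> 0"
  have "cl_D B V (walk w \<omega>) (Suc j) = Some n"
  proof (rule ccontr)
    assume "cl_D B V (walk w \<omega>) (Suc j) \<noteq> Some n"
    then have "Acoef B V g w j n \<omega> = 0" unfolding Acoef_def by (rule if_not_P)
    with h show False by contradiction
  qed
  from cl_D_Suc_Some[OF this] show ?thesis by blast
qed

lemma markov_step:
  fixes w :: "'d::finite pt"
  assumes Sup: "\<And>w'. w' \<in> V \<Longrightarrow> (\<integral>\<^sup>+\<omega>. Tsum B V g w' \<omega> \<partial>srw_steps) \<le> S"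
  shows "(\<integral>\<^sup>+\<omega>. Acoef B V g w j n \<omega> * (\<Sum>m. cterm B V g w \<omega> (Suc j + m)) \<partial>srw_steps)
     \<le> S * (\<integral>\<^sup>+\<omega>. Acoef B V g w j n \<omega> \<partial>srw_steps)"
proof -
  interpret S: prob_space "stream_space (PM :: 'd pt measure)"
    by (rule prob_space.prob_space_stream_space[OF prob_PM])
  let ?f = "\<lambda>\<omega>. Acoef B V g w j n \<omega> * Tsum B V g (walk w \<omega> n) (sdrop n \<omega>)"
  have fm: "?f \<in> borel_measurable (stream_space PM)"
  proof -
    have "(\<lambda>\<omega>. Acoef B V g w j n \<omega> * (\<Sum>m. cterm B V g w \<omega> (Suc j + m))) \<in> borel_measurable srw_steps"
      by measurable
    then show ?thesis unfolding Acoef_R srw_eq .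
  qed
  have "(\<integral>\<^sup>+\<omega>. Acoef B V g w j n \<omega> * (\<Sum>m. cterm B V g w \<omega> (Suc j + m)) \<partial>srw_steps)
      = (\<integral>\<^sup>+\<omega>. ?f \<omega> \<partial>stream_space PM)"
    unfolding Acoef_R srw_eq ..
  also have "\<dots> = (\<integral>\<^sup>+\<omega>. \<integral>\<^sup>+\<omega>'. ?f (stake n \<omega> @- \<omega>') \<partial>stream_space PM \<partial>stream_space PM)"
    by (rule prob_space.nn_integral_stream_split[OF prob_PM fm])
  also have "\<dots> = (\<integral>\<^sup>+\<omega>. \<integral>\<^sup>+\<omega>'. Acoef B V g w j n \<omega> * Tsum B V g (walk w \<omega> n) \<omega>' \<partial>stream_space PM \<partial>stream_space PM)"
  proof (intro nn_integral_cong)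
    fix \<omega> \<omega>' :: "'d pt stream"
    have st: "stake n (stake n \<omega> @- \<omega>') = stake n \<omega>" by (simp add: stake_shift)
    have "Acoef B V g w j n (stake n \<omega> @- \<omega>') = Acoef B V g w j n \<omega>" by (rule Acoef_fd[OF st])
    moreover have "walk w (stake n \<omega> @- \<omega>') n = walk w \<omega> n" by (rule walk_agree[OF st]) simp
    moreover have "sdrop n (stake n \<omega> @- \<omega>') = \<omega>'" by (simp add: sdrop_shift)
    ultimately show "?f (stake n \<omega> @- \<omega>') = Acoef B V g w j n \<omega> * Tsum B V g (walk w \<omega> n) \<omega>'" by simp
  qed
  also have "\<dots> = (\<integral>\<^sup>+\<omega>. Acoef B V g w j n \<omega> * (\<integral>\<^sup>+\<omega>'. Tsum B V g (walk w \<omega> n) \<omega>' \<partial>stream_space PM) \<partial>stream_space PM)"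
    by (intro nn_integral_cong nn_integral_cmult measurable_Tsum[unfolded srw_eq])
  also have "\<dots> \<le> (\<integral>\<^sup>+\<omega>. Acoef B V g w j n \<omega> * S \<partial>stream_space PM)"
  proof (intro nn_integral_mono)
    fix \<omega>
    show "Acoef B V g w j n \<omega> * (\<integral>\<^sup>+\<omega>'. Tsum B V g (walk w \<omega> n) \<omega>' \<partial>stream_space PM) \<le> Acoef B V g w j n \<omega> * S"
    proof (cases "Acoef B V g w j n \<omega> = 0")
      case False
      then have "walk w \<omega> n \<in> V" by (rule Acoef_nz)
      then show ?thesis using Sup[of "walk w \<omega> n", unfolded srw_eq] by (simp add: mult_left_mono)
    qed simp
  qed
  also have "\<dots> = S * (\<integral>\<^sup>+\<omega>. Acoef B V g w j n \<omega> \<partial>srw_steps)"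
    unfolding srw_eq by (subst nn_integral_multc[OF measurable_Acoef[unfolded srw_eq]]) (rule mult.commute)
  finally show ?thesis .
qed

lemma markov_bound:
  fixes w :: "'d::finite pt"
  assumes Sup: "\<And>w'. w' \<in> V \<Longrightarrow> (\<integral>\<^sup>+\<omega>. Tsum B V g w' \<omega> \<partial>srw_steps) \<le> S"
  shows "(\<integral>\<^sup>+\<omega>. cterm B V g w \<omega> j * (\<Sum>m. cterm B V g w \<omega> (Suc j + m)) \<partial>srw_steps)
     \<le> S * (\<integral>\<^sup>+\<omega>. cterm B V g w \<omega> j \<partial>srw_steps)"
proof -
  have "(\<integral>\<^sup>+\<omega>. cterm B V g w \<omega> j * (\<Sum>m. cterm B V g w \<omega> (Suc j + m)) \<partial>srw_steps)
      = (\<Sum>n. \<integral>\<^sup>+\<omega>. Acoef B V g w j n \<omega> * (\<Sum>m. cterm B V g w \<omega> (Suc j + m)) \<partial>srw_steps)"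
    unfolding pointwise_decomp by (rule nn_integral_suminf) (rule borel_measurable_times_ennreal[OF measurable_Acoef measurable_Rsum])
  also have "\<dots> \<le> (\<Sum>n. S * (\<integral>\<^sup>+\<omega>. Acoef B V g w j n \<omega> \<partial>srw_steps))"
    by (rule suminf_le[OF markov_step[OF Sup] summableI summableI])
  also have "\<dots> = S * (\<Sum>n. \<integral>\<^sup>+\<omega>. Acoef B V g w j n \<omega> \<partial>srw_steps)"
    by (rule ennreal_suminf_cmult)
  also have "(\<Sum>n. \<integral>\<^sup>+\<omega>. Acoef B V g w j n \<omega> \<partial>srw_steps) = (\<integral>\<^sup>+\<omega>. (\<Sum>n. Acoef B V g w j n \<omega>) \<partial>srw_steps)"
    by (rule nn_integral_suminf[symmetric]) (rule measurable_Acoef)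
  also have "S * (\<integral>\<^sup>+\<omega>. (\<Sum>n. Acoef B V g w j n \<omega>) \<partial>srw_steps) \<le> S * (\<integral>\<^sup>+\<omega>. cterm B V g w \<omega> j \<partial>srw_steps)"
    by (intro mult_left_mono nn_integral_mono Acoef_sum_le) simp
  finally show ?thesis .
qed




definition Gsum where
  "Gsum B V g w z = (\<Sum>k. ennreal (snd z !! k) * cterm B V g w (fst z) k)"

lemma measurable_Gsum[measurable]: "Gsum B V g w \<in> borel_measurable (srw_steps \<Otimes>\<^sub>M XI)"
  unfolding Gsum_def by measurable

lemma pair_sf: "pair_sigma_finite srw_steps XI"
proof -
  interpret A: prob_space srw_steps by (rule prob_srw)
  interpret B: prob_space XI by (rule prob_space.prob_space_stream_space[OF prob_XD])
  show ?thesis by unfold_locales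
qed

lemma fubini_joint:
  assumes "f \<in> borel_measurable (srw_steps \<Otimes>\<^sub>M XI)"
  shows "(\<integral>\<^sup>+z. f z \<partial>joint) = (\<integral>\<^sup>+\<omega>. \<integral>\<^sup>+\<xi>. f (\<omega>, \<xi>) \<partial>XI \<partial>srw_steps)"
proof -
  interpret P: pair_sigma_finite srw_steps XI by (rule pair_sf)
  show ?thesis unfolding joint_def by (rule P.M2.nn_integral_fst[OF assms, symmetric])
qed

lemma E_Gsum: "(\<integral>\<^sup>+z. Gsum B V g w z \<partial>joint) = (\<integral>\<^sup>+\<omega>. Tsum B V g w \<omega> \<partial>srw_steps)"
  by (simp add: fubini_joint Gsum_def xi_first Tsum_def)

lemma E_Gsum2: "(\<integral>\<^sup>+z. (Gsum B V g w z)^2 \<partial>joint)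
   = (\<integral>\<^sup>+\<omega>. 2 * (\<Sum>j. cterm B V g w \<omega> j * cterm B V g w \<omega> j
          + cterm B V g w \<omega> j * (\<Sum>m. cterm B V g w \<omega> (Suc j + m))) \<partial>srw_steps)"
proof -
  have "(\<lambda>z. (Gsum B V g w z)^2) \<in> borel_measurable (srw_steps \<Otimes>\<^sub>M XI)" by measurable
  then show ?thesis by (simp add: fubini_joint Gsum_def xi_second del: ennreal_suminf_cmult)
qed

lemma main_generic:
  fixes w0 :: "'d::finite pt"
  assumes w0: "w0 \<in> V"
    and bound: "\<And>w y. w \<in> V \<Longrightarrow> y \<in> B \<Longrightarrow> g w y \<le> gs"
    and Sup: "\<And>w'. w' \<in> V \<Longrightarrow> (\<integral>\<^sup>+\<omega>. Tsum B V g w' \<omega> \<partial>srw_steps) \<le> S"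
  shows "(\<integral>\<^sup>+z. (Gsum B V g w0 z)^2 \<partial>joint) \<le> 2 * (\<integral>\<^sup>+z. Gsum B V g w0 z \<partial>joint) * (S + gs)"
proof -
  let ?c = "\<lambda>j \<omega>. cterm B V g w0 \<omega> j"
  let ?R = "\<lambda>j \<omega>. \<Sum>m. cterm B V g w0 \<omega> (Suc j + m)"
  have "(\<integral>\<^sup>+z. (Gsum B V g w0 z)^2 \<partial>joint)
      = (\<integral>\<^sup>+\<omega>. 2 * (\<Sum>j. ?c j \<omega> * ?c j \<omega> + ?c j \<omega> * ?R j \<omega>) \<partial>srw_steps)"
    by (rule E_Gsum2)
  also have "\<dots> = 2 * (\<integral>\<^sup>+\<omega>. (\<Sum>j. ?c j \<omega> * ?c j \<omega> + ?c j \<omega> * ?R j \<omega>) \<partial>srw_steps)"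
    by (rule nn_integral_cmult) measurable
  also have "(\<integral>\<^sup>+\<omega>. (\<Sum>j. ?c j \<omega> * ?c j \<omega> + ?c j \<omega> * ?R j \<omega>) \<partial>srw_steps)
      = (\<Sum>j. (\<integral>\<^sup>+\<omega>. ?c j \<omega> * ?c j \<omega> \<partial>srw_steps) + (\<integral>\<^sup>+\<omega>. ?c j \<omega> * ?R j \<omega> \<partial>srw_steps))"
    by (subst nn_integral_suminf) (measurable, simp add: nn_integral_add)
  also have "\<dots> \<le> (\<Sum>j. gs * (\<integral>\<^sup>+\<omega>. ?c j \<omega> \<partial>srw_steps) + S * (\<integral>\<^sup>+\<omega>. ?c j \<omega> \<partial>srw_steps))"
  proof (rule suminf_le[OF _ summableI summableI])
    fix j
    have "(\<integral>\<^sup>+\<omega>. ?c j \<omega> * ?c j \<omega> \<partial>srw_steps) \<le> (\<integral>\<^sup>+\<omega>. gs * ?c j \<omega> \<partial>srw_steps)"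
      by (intro nn_integral_mono mult_right_mono cterm_le[OF w0 bound]) auto
    also have "\<dots> = gs * (\<integral>\<^sup>+\<omega>. ?c j \<omega> \<partial>srw_steps)"
      by (rule nn_integral_cmult) simp
    finally have 1: "(\<integral>\<^sup>+\<omega>. ?c j \<omega> * ?c j \<omega> \<partial>srw_steps) \<le> gs * (\<integral>\<^sup>+\<omega>. ?c j \<omega> \<partial>srw_steps)" .
    have 2: "(\<integral>\<^sup>+\<omega>. ?c j \<omega> * ?R j \<omega> \<partial>srw_steps) \<le> S * (\<integral>\<^sup>+\<omega>. ?c j \<omega> \<partial>srw_steps)"
      by (rule markov_bound[OF Sup])
    show "(\<integral>\<^sup>+\<omega>. ?c j \<omega> * ?c j \<omega> \<partial>srw_steps) + (\<integral>\<^sup>+\<omega>. ?c j \<omega> * ?R j \<omega> \<partial>srw_steps)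
        \<le> gs * (\<integral>\<^sup>+\<omega>. ?c j \<omega> \<partial>srw_steps) + S * (\<integral>\<^sup>+\<omega>. ?c j \<omega> \<partial>srw_steps)"
      using 1 2 by (rule add_mono)
  qed
  also have "\<dots> = (S + gs) * (\<Sum>j. \<integral>\<^sup>+\<omega>. ?c j \<omega> \<partial>srw_steps)"
    by (simp add: distrib_right[symmetric] add.commute del: ennreal_suminf_cmult)
       (simp add: mult.commute)
  also have "(\<Sum>j. \<integral>\<^sup>+\<omega>. ?c j \<omega> \<partial>srw_steps) = (\<integral>\<^sup>+z. Gsum B V g w0 z \<partial>joint)"
    unfolding E_Gsum Tsum_def by (rule nn_integral_suminf[symmetric]) simp
  finally show ?thesis
    by (simp only: mult_ac) (erule meta_mp; simp add: mult_right_mono)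
qed


theorem proposition4p2:
  fixes A1 :: "'d::finite pt set" and r s :: real and w0 a b :: "'d pt"
  assumes "CARD('d) \<ge> 3" and "0 < s" and "s < r"
    and "A1 = ball_set r \<or> A1 = nbhd s (cube_set (r - s))"
    and "w0 \<in> V_of s A1" and "a \<in> bdry A1" and "b \<in> V_of s A1"
  shows "(\<integral>\<^sup>+ z. (softG s A1 w0 a b z)^2 \<partial>joint)
     \<le> 2 * (\<integral>\<^sup>+ z. softG s A1 w0 a b z \<partial>joint)
         * ((SUP w'\<in>V_of s A1. \<integral>\<^sup>+ z. softG s A1 w' a b z \<partial>joint)
            + (SUP (w, y)\<in>V_of s A1 \<times> bdry (A2_of s A1). ennreal (gfun s A1 w y a b)))"
proof -
  define B where "B = bdry (A2_of s A1)"
  define V where "V = V_of s A1"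
  define g where "g = (\<lambda>w y. ennreal (gfun s A1 w y a b))"
  have sG: "softG s A1 w a b = Gsum B V g w" for w
    by (rule ext) (simp add: softG_def Gsum_def cterm_def B_def V_def g_def Let_def)
  let ?S = "SUP w'\<in>V_of s A1. \<integral>\<^sup>+ z. softG s A1 w' a b z \<partial>joint"
  let ?gs = "SUP (w, y)\<in>V_of s A1 \<times> bdry (A2_of s A1). ennreal (gfun s A1 w y a b)"
  have bound: "g w y \<le> ?gs" if "w \<in> V" "y \<in> B" for w y
    using SUP_upper[of "(w,y)" "V_of s A1 \<times> bdry (A2_of s A1)" "\<lambda>(w,y). ennreal (gfun s A1 w y a b)"] that
    by (simp add: g_def B_def V_def)
  have Sup: "(\<integral>\<^sup>+\<omega>. Tsum B V g w' \<omega> \<partial>srw_steps) \<le> ?S" if "w' \<in> V" for w'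
  proof -
    have "(\<integral>\<^sup>+ z. softG s A1 w' a b z \<partial>joint) \<le> ?S"
      using that unfolding V_def by (rule SUP_upper)
    then show ?thesis by (simp only: sG E_Gsum)
  qed
  have w0: "w0 \<in> V" using assms(5) by (simp add: V_def)
  have "(\<integral>\<^sup>+z. (Gsum B V g w0 z)^2 \<partial>joint) \<le> 2 * (\<integral>\<^sup>+z. Gsum B V g w0 z \<partial>joint) * (?S + ?gs)"
    by (rule main_generic[OF w0 bound Sup])
  then show ?thesis by (simp only: sG)
qed

end
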